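(* Fix $J,h\in\mathbb{R}$, a $G$-covariant transition rate $c$, $m\in\mathbb{N}$ and $p\in P_m$. For each $n\ge m$ let $\langle p\rangle_n^*$ be the minimum of $LP(p,n)$ and let $m_n^*$ be a minimizer, writing $\langle q\rangle_n^*=m_n^*(q)$ for $q\in P_n$. Then: (1) the limit $\langle p\rangle_\infty=\lim_{n\to\infty}\langle p\rangle_n^*$ exists; (2) for every $l\in\mathbb{N}$, the sequence of vectors $\big(\langle\underline{s}_A\rangle_n^*\big)_{A\subseteq D_l}\in\mathbb{R}^{2^{|D_l|}}$, $n\ge\max(m,l)$, has a convergent subsequence, indexed by some $Q\subseteq\{\max(m,l),\max(m,l)+1,\dots\}$, with limits $\langle\underline{s}_A\rangle_\infty=\lim_{n\in Q,n\to\infty}\langle\underline{s}_A\rangle_n^*$; (3) there exists a lattice-symmetric probability measure $\mu$ on $(S,V)$ which is invariant for the stochastic Ising model with rate $c$ and satisfies $\int p\,d\mu=\langle p\rangle_\infty$ and $\int\underline{s}_A\,d\mu=\langle\underline{s}_A\rangle_\infty$ for all $A\subseteq D_l$; (4) for every lattice-symmetric invariant probability measure $\mu'$ of the stochastic Ising model with rate $c$, $\int p\,d\mu\le\int p\,d\mu'$.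
   Context: $S=\{-1,1\}^{\mathbb{Z}^d}$ with $\sigma$-algebra $V$ generated by cylinder events $E(\{u_i\}_{i\in A})=\{s:s_i=u_i\ \forall i\in A\}$ ($A$ finite). $\underline{s}_A=\prod_{i\in A}s_i$ ($\underline{s}_\varnothing=1$); $P(S)$ is the real linear span of $\{\underline{s}_A:A\text{ finite}\}$; $D_n=\{i\in\mathbb{Z}^d:\|i\|_1\le n-1\}$ ($n\ge1$), $D_0=\varnothing$; $P_n$ is the span of $\{\underline{s}_A:A\subseteq D_n\}$ (functions of finitely many spins are reduced to such polynomials using $s_j^2=1$). $\bar s^i$ agrees with $s$ except $(\bar s^i)_i=-s_i$; $n(i)=\{j:\|i-j\|_1=1\}$; $F(\{u_i\}_{i\in A},s)=\prod_{i\in A}\frac{1+u_is_i}{2}$. Lattice symmetry group $G$: bijections of $\mathbb{Z}^d$ generated by unit translations, coordinate permutations and coordinate sign changes; $A\sim B$ iff $B=g(A)$ for some $g\in G$. A probability measure $\mu$ on $(S,V)$ is lattice-symmetric if $\int\underline{s}_A\,d\mu=\int\underline{s}_{g(A)}\,d\mu$ for all finite $A$ and $g\in G$. A transition rate at couplings $J,h$ is a family of strictly positive reals $c(i,s)$ such that $c(i,s)$ depends only on $s_i$ and $(s_j)_{j\in n(i)}$ and $c(i,s)\exp(hs_i+J\sum_{j\in n(i)}s_is_j)$ does not depend on $s_i$; it is $G$-covariant if $c(g(i),s\circ g^{-1})=c(i,s)$ for all $g\in G$. Example: $c^*(i,s)=C\big(1+\exp(-2hs_i-2J\sum_{j\in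 n(i)}s_is_j)\big)$, $C>0$ a constant. A probability measure $\mu$ on $(S,V)$ is invariant for the stochastic Ising model with rate $c$ if $\sum_{i\in\mathbb{Z}^d}\int c(i,s)(f(\bar s^i)-f(s))\,d\mu=0$ for all $f\in P(S)$ (only finitely many terms are nonzero; this is equivalent to the generator condition over the core of the Markov process). $LP(p,n)$ ($n\ge m$): minimize $m_n(p)$ over linear maps $m_n:P_n\to\mathbb{R}$ with (PB) $m_n(F(\{u_i\}_{i\in D_n},\cdot))\ge0$ for all $u\in\{-1,1\}^{D_n}$; (N) $m_n(1)=1$; (Sym) $m_n(\underline{s}_A)=m_n(\underline{s}_B)$ whenever $A,B\subseteq D_n$, $A\sim B$; (Inv) $\sum_{i\in D_{n-1}}m_n\big(c(i,s)(f(\bar s^i)-f(s))\big)=0$ for all $f\in P_{n-1}$. The feasible set is nonempty and compact, so the minimum is attained. *)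

theory Defs
  imports "HOL-Probability.Probability"
begin

text \<open>Sites of the lattice Z^d are functions 'd \<Rightarrow> int for a finite index type 'd
  (d = CARD('d)). A spin configuration is a function site \<Rightarrow> bool, where True encodes
  spin +1 and False encodes spin -1.\<close>

type_synonym 'd site = "'d \<Rightarrow> int"
type_synonym 'd config = "'d site \<Rightarrow> bool"

definition spin :: "'d config \<Rightarrow> 'd site \<Rightarrow> real" where
  "spin s i = (if s i then 1 else -1)"

definition spinM :: "'d config measure" where
  "spinM = PiM UNIV (\<lambda>_. count_space UNIV)"

definition l1norm :: "'d::finite site \<Rightarrow> int" where
  "l1norm i = (\<Sum>k\<in>UNIV. \<bar>i k\<bar>)"

definition D :: "nat \<Rightarrow> 'd::finite site set" where
  "D n = (if n = 0 then {} else {i. l1norm i \<le> int n - 1})"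

definition nbr :: "'d::finite site \<Rightarrow> 'd site set" where
  "nbr i = {j. l1norm (\<lambda>k. i k - j k) = 1}"

definition flip :: "'d site \<Rightarrow> 'd config \<Rightarrow> 'd config" where
  "flip i s = s(i := \<not> s i)"

definition smono :: "'d site set \<Rightarrow> 'd config \<Rightarrow> real" where
  "smono A s = (\<Prod>i\<in>A. spin s i)"

definition Poly_on :: "'d site set \<Rightarrow> ('d config \<Rightarrow> real) set" where
  "Poly_on X = {f. \<exists>\<A> a. finite \<A> \<and> (\<forall>A\<in>\<A>. finite A \<and> A \<subseteq> X)
                      \<and> f = (\<lambda>s. \<Sum>A\<in>\<A>. a A * smono A s)}"

definition PS :: "('d config \<Rightarrow> real) set" where
  "PS = Poly_on UNIV"

definition Pn :: "nat \<Rightarrow> ('d::finite config \<Rightarrow> real) set" where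
  "Pn n = Poly_on (D n)"

definition Fcyl :: "'d::finite site set \<Rightarrow> 'd config \<Rightarrow> 'd config \<Rightarrow> real" where
  "Fcyl A u s = (\<Prod>i\<in>A. (1 + spin u i * spin s i) / 2)"

definition sym_gen :: "('d site \<Rightarrow> 'd site) set" where
  "sym_gen = {(\<lambda>i. i(k := i k + 1)) | k. True} \<union> {(\<lambda>i. i(k := i k - 1)) | k. True}
     \<union> {(\<lambda>i. i \<circ> \<pi>) | \<pi>. bij \<pi>} \<union> {(\<lambda>i. i(k := - i k)) | k. True}"

text \<open>The group G generated by sym_gen (the generator set is closed under inverses,
  so the generated monoid is the generated group).\<close>
inductive_set latG :: "('d site \<Rightarrow> 'd site) set" where
  latG_id: "id \<in> latG"
| latG_step: "g \<in> latG \<Longrightarrow> t \<in> sym_gen \<Longrightarrow> t \<circ> g \<in> latG"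

definition lat_equiv :: "'d site set \<Rightarrow> 'd site set \<Rightarrow> bool" where
  "lat_equiv A B \<longleftrightarrow> (\<exists>g\<in>latG. B = g ` A)"

definition lattice_symmetric :: "'d config measure \<Rightarrow> bool" where
  "lattice_symmetric \<mu> \<longleftrightarrow> (\<forall>A g. finite A \<and> g \<in> latG \<longrightarrow>
      (\<integral>s. smono A s \<partial>\<mu>) = (\<integral>s. smono (g ` A) s \<partial>\<mu>))"

definition is_prob_on_S :: "'d config measure \<Rightarrow> bool" where
  "is_prob_on_S \<mu> \<longleftrightarrow> prob_space \<mu> \<and> sets \<mu> = sets spinM"

definition transition_rate ::
  "real \<Rightarrow> real \<Rightarrow> ('d::finite site \<Rightarrow> 'd config \<Rightarrow> real) \<Rightarrow> bool" where
  "transition_rate J h c \<longleftrightarrow>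
     (\<forall>i s. c i s > 0) \<and>
     (\<forall>i s s'. (\<forall>j\<in>insert i (nbr i). s j = s' j) \<longrightarrow> c i s = c i s') \<and>
     (\<forall>i s. c i s * exp (h * spin s i + J * (\<Sum>j\<in>nbr i. spin s i * spin s j))
          = c i (flip i s) * exp (h * spin (flip i s) i
                 + J * (\<Sum>j\<in>nbr i. spin (flip i s) i * spin (flip i s) j)))"

definition G_covariant :: "('d site \<Rightarrow> 'd config \<Rightarrow> real) \<Rightarrow> bool" where
  "G_covariant c \<longleftrightarrow> (\<forall>g\<in>latG. \<forall>i s. c (g i) (s \<circ> inv g) = c i s)"

text \<open>Invariance: the sum over i of the integrals, which has only finitely many nonzero
  terms, namely those i with f(flip i s) \<noteq> f s for some s.\<close>
definition invariant :: "('d site \<Rightarrow> 'd config \<Rightarrow> real) \<Rightarrow> 'd config measure \<Rightarrow> bool" where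
  "invariant c \<mu> \<longleftrightarrow> (\<forall>f\<in>PS.
     (\<Sum>i\<in>{i. \<exists>s. f (flip i s) \<noteq> f s}. \<integral>s. c i s * (f (flip i s) - f s) \<partial>\<mu>) = 0)"

definition LP_feasible ::
  "('d::finite site \<Rightarrow> 'd config \<Rightarrow> real) \<Rightarrow> nat \<Rightarrow> (('d config \<Rightarrow> real) \<Rightarrow> real) \<Rightarrow> bool" where
  "LP_feasible c n mn \<longleftrightarrow>
     (\<forall>f\<in>Pn n. \<forall>g\<in>Pn n. \<forall>a b. mn (\<lambda>s. a * f s + b * g s) = a * mn f + b * mn g) \<and>
     (\<forall>u. mn (Fcyl (D n) u) \<ge> 0) \<and>
     mn (\<lambda>s. 1) = 1 \<and>
     (\<forall>A B. A \<subseteq> D n \<and> B \<subseteq> D n \<and> lat_equiv A B \<longrightarrow> mn (smono A) = mn (smono B)) \<and>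
     (\<forall>f\<in>Pn (n - 1). (\<Sum>i\<in>D (n - 1). mn (\<lambda>s. c i s * (f (flip i s) - f s))) = 0)"

definition LP_optimal ::
  "('d::finite site \<Rightarrow> 'd config \<Rightarrow> real) \<Rightarrow> ('d config \<Rightarrow> real) \<Rightarrow> nat
     \<Rightarrow> (('d config \<Rightarrow> real) \<Rightarrow> real) \<Rightarrow> bool" where
  "LP_optimal c p n mn \<longleftrightarrow> LP_feasible c n mn \<and> (\<forall>m'. LP_feasible c n m' \<longrightarrow> mn p \<le> m' p)"

end

theory Submission
  imports Defs
begin


definition loc :: "'d site set \<Rightarrow> ('d config \<Rightarrow> real) \<Rightarrow> bool" where
  "loc L f \<longleftrightarrow> (\<forall>s s'. (\<forall>i\<in>L. s i = s' i) \<longrightarrow> f s = f s')"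

definition UU :: "'d site set \<Rightarrow> 'd config set" where
  "UU L = {u. \<forall>i. i \<notin> L \<longrightarrow> \<not> u i}"

definition rep :: "'d site set \<Rightarrow> 'd config \<Rightarrow> 'd config" where
  "rep L s = (\<lambda>i. i \<in> L \<and> s i)"

lemma UU_image: "UU L = (\<lambda>B i. i \<in> B) ` Pow L"
proof
  show "UU L \<subseteq> (\<lambda>B i. i \<in> B) ` Pow L"
  proof
    fix u assume u: "u \<in> UU L"
    have "u = (\<lambda>i. i \<in> {i. u i})" by auto
    moreover have "{i. u i} \<subseteq> L" using u by (auto simp: UU_def)
    ultimately show "u \<in> (\<lambda>B i. i \<in> B) ` Pow L" by blast
  qed
qed (auto simp: UU_def)

lemma finite_UU: "finite L \<Longrightarrow> finite (UU L)"
  by (simp add: UU_image)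

lemma rep_UU: "rep L s \<in> UU L"
  by (simp add: rep_def UU_def)

lemma Fcyl_eq: "finite L \<Longrightarrow> Fcyl L u s = (if \<forall>i\<in>L. s i = u i then 1 else 0)"
proof (cases "\<forall>i\<in>L. s i = u i")
  case True
  then have "\<forall>i\<in>L. (1 + spin u i * spin s i) / 2 = (1::real)"
    by (auto simp: spin_def)
  then show ?thesis using True by (simp add: Fcyl_def)
next
  case False
  then obtain i where "i \<in> L" "s i \<noteq> u i" by auto
  moreover assume "finite L"
  moreover have "(1 + spin u i * spin s i) / 2 = (0::real)" using \<open>s i \<noteq> u i\<close>
    by (auto simp: spin_def)
  ultimately show ?thesis using False unfolding Fcyl_def
    by (auto intro!: prod_zero)
qed

lemma Fcyl_nonneg: "finite L \<Longrightarrow> Fcyl L u s \<ge> 0"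
  by (simp add: Fcyl_eq)

lemma Fcyl_le1: "finite L \<Longrightarrow> Fcyl L u s \<le> 1"
  by (simp add: Fcyl_eq)

lemma loc_expand:
  assumes "finite L" "loc L f"
  shows "f s = (\<Sum>u\<in>UU L. f u * Fcyl L u s)"
proof -
  have "(\<Sum>u\<in>UU L. f u * Fcyl L u s) = (\<Sum>u\<in>UU L. if u = rep L s then f u else 0)"
  proof (rule sum.cong)
    fix u assume u: "u \<in> UU L"
    have "(\<forall>i\<in>L. s i = u i) \<longleftrightarrow> u = rep L s"
      using u by (auto simp: UU_def rep_def fun_eq_iff)
    then show "f u * Fcyl L u s = (if u = rep L s then f u else 0)"
      using assms(1) by (simp add: Fcyl_eq)
  qed simp
  also have "\<dots> = f (rep L s)" using rep_UU[of L s] finite_UU[OF assms(1)]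
    by (simp add: sum.delta')
  also have "\<dots> = f s" using assms(2) unfolding loc_def by (auto simp: rep_def)
  finally show ?thesis by simp
qed

lemma loc_Fcyl: "finite L \<Longrightarrow> loc L (Fcyl L u)"
  by (simp add: loc_def Fcyl_eq)

lemma loc_smono: "A \<subseteq> L \<Longrightarrow> loc L (smono A)"
  unfolding loc_def smono_def spin_def by (auto intro!: prod.cong)

lemma loc_mono: "loc L f \<Longrightarrow> L \<subseteq> L' \<Longrightarrow> loc L' f"
  unfolding loc_def by blast

lemma loc_lin: "\<forall>x\<in>I. loc L (g x) \<Longrightarrow> loc L (\<lambda>s. \<Sum>x\<in>I. a x * g x s)"
  unfolding loc_def by (auto intro!: sum.cong)

lemma loc_const: "loc L (\<lambda>s. a)"
  by (simp add: loc_def)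

lemma Poly_on_loc: "f \<in> Poly_on X \<Longrightarrow> loc X f"
  unfolding Poly_on_def
  by (auto intro!: loc_lin[rule_format] loc_smono)

lemma Fcyl_poly:
  fixes L :: "'d::finite site set"
  assumes "finite L"
  shows "Fcyl L u s = (\<Sum>X\<in>Pow L. ((\<Prod>i\<in>X. spin u i / 2) * (1/2) ^ card (L - X)) * smono X s)"
proof -
  define g where "g i = spin u i / 2" for i
  have "Fcyl L u s = (\<Prod>i\<in>L. g i * spin s i + 1/2)"
    unfolding Fcyl_def g_def by (auto intro!: prod.cong simp: field_simps)
  also have "\<dots> = (\<Sum>X\<in>Pow L. (\<Prod>i\<in>X. g i * spin s i) * (\<Prod>i\<in>L - X. 1/2))"
    by (rule prod_add[OF assms])
  also have "\<dots> = (\<Sum>X\<in>Pow L. ((\<Prod>i\<in>X. g i) * (1/2) ^ card (L - X)) * smono X s)"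
    by (intro sum.cong refl) (simp add: smono_def prod.distrib mult_ac)
  finally show ?thesis unfolding g_def .
qed

lemma loc_Poly_on:
  fixes L :: "'d::finite site set"
  assumes L: "finite L" and f: "loc L f"
  shows "f \<in> Poly_on L"
proof -
  define a where "a X = (\<Sum>u\<in>UU L. f u * ((\<Prod>i\<in>X. spin u i / 2) * (1/2) ^ card (L - X)))" for X
  have "f s = (\<Sum>X\<in>Pow L. a X * smono X s)" for s
  proof -
    have "f s = (\<Sum>u\<in>UU L. f u * (\<Sum>X\<in>Pow L. ((\<Prod>i\<in>X. spin u i / 2) * (1/2) ^ card (L - X)) * smono X s))"
      using loc_expand[OF L f, of s] Fcyl_poly[OF L] by simp
    also have "\<dots> = (\<Sum>X\<in>Pow L. a X * smono X s)"
      unfolding a_def sum_distrib_left sum_distrib_right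
      by (subst sum.swap) (simp add: mult.assoc)
    finally show ?thesis .
  qed
  then have "f = (\<lambda>s. \<Sum>X\<in>Pow L. a X * smono X s)" by auto
  moreover have "\<forall>X\<in>Pow L. finite X \<and> X \<subseteq> L" using L by (auto intro: finite_subset)
  ultimately show ?thesis unfolding Poly_on_def using L by blast
qed

lemma l1norm_ge: "\<bar>i k\<bar> \<le> l1norm i"
  unfolding l1norm_def by (rule member_le_sum) auto

lemma finite_D: "finite (D n :: 'd::finite site set)"
proof -
  have "D n \<subseteq> PiE UNIV (\<lambda>_::'d. {- int n..int n})"
  proof
    fix i :: "'d site" assume "i \<in> D n"
    then have "l1norm i \<le> int n" by (auto simp: D_def split: if_splits)
    then have "\<bar>i k\<bar> \<le> int n" for k using l1norm_ge[of i k] by linarith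
    then have "i k \<in> {- int n..int n}" for k using abs_le_iff[of "i k" "int n"] by auto
    then show "i \<in> PiE UNIV (\<lambda>_::'d. {- int n..int n})" by auto
  qed
  moreover have "finite (PiE UNIV (\<lambda>_::'d. {- int n..int n}))"
    by (rule finite_PiE) auto
  ultimately show ?thesis by (rule finite_subset)
qed

lemma D_mono: "n \<le> n' \<Longrightarrow> D n \<subseteq> D n'"
  by (auto simp: D_def)

lemma D_exhaust: "finite (A :: 'd::finite site set) \<Longrightarrow> \<exists>n. A \<subseteq> D n"
proof (induction A rule: finite_induct)
  case empty then show ?case by auto
next
  case (insert x A)
  then obtain n where n: "A \<subseteq> D n" by auto
  have "l1norm x \<ge> 0" unfolding l1norm_def by (auto intro: sum_nonneg)
  then have "x \<in> D (nat (l1norm x) + 1)" by (auto simp: D_def)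
  then show ?case using n D_mono[of n "max n (nat (l1norm x) + 1)"]
      D_mono[of "nat (l1norm x) + 1" "max n (nat (l1norm x) + 1)"]
    by (intro exI[of _ "max n (nat (l1norm x) + 1)"]) auto
qed

lemma finite_nbr: "finite (nbr (i :: 'd::finite site))"
proof -
  have "nbr i \<subseteq> PiE UNIV (\<lambda>k. {i k - 1..i k + 1})"
  proof
    fix j assume "j \<in> nbr i"
    then have "\<bar>i k - j k\<bar> \<le> 1" for k using l1norm_ge[of "\<lambda>k. i k - j k" k] by (auto simp: nbr_def)
    then have "j k \<in> {i k - 1..i k + 1}" for k using abs_le_iff[of "i k - j k" 1] by auto
    then show "j \<in> PiE UNIV (\<lambda>k. {i k - 1..i k + 1})" by auto
  qed
  moreover have "finite (PiE UNIV (\<lambda>k. {i k - 1..i k + 1}))" by (rule finite_PiE) auto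
  ultimately show ?thesis by (rule finite_subset)
qed

lemma Poly_on_mono:
  assumes "f \<in> Poly_on X" "X \<subseteq> Y" shows "f \<in> Poly_on Y"
proof -
  obtain \<A> a where A: "finite \<A>" "\<forall>A\<in>\<A>. finite A \<and> A \<subseteq> X" "f = (\<lambda>s. \<Sum>A\<in>\<A>. a A * smono A s)"
    using assms(1) unfolding Poly_on_def by blast
  have "\<forall>A\<in>\<A>. finite A \<and> A \<subseteq> Y" using A(2) assms(2) by blast
  then show ?thesis unfolding Poly_on_def using A(1,3) by blast
qed

lemma Pn_eq: "Pn n = Collect (loc (D n :: 'd::finite site set))"
proof (rule set_eqI)
  fix f :: "'d config \<Rightarrow> real"
  show "f \<in> Pn n \<longleftrightarrow> f \<in> Collect (loc (D n))"
    using Poly_on_loc[of f "D n"] loc_Poly_on[OF finite_D, of n f] unfolding Pn_def by auto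
qed

lemma PS_loc: "f \<in> PS \<Longrightarrow> \<exists>L. finite L \<and> loc L f"
proof -
  assume "f \<in> PS"
  then obtain \<A> a where A: "finite \<A>" "\<forall>A\<in>\<A>. finite A" "f = (\<lambda>s. \<Sum>A\<in>\<A>. a A * smono A s)"
    unfolding PS_def Poly_on_def by blast
  have "loc (\<Union>\<A>) f" unfolding A(3) by (rule loc_lin) (auto intro: loc_smono)
  then show ?thesis using A by blast
qed

lemma loc_PS: "finite (L :: 'd::finite site set) \<Longrightarrow> loc L f \<Longrightarrow> f \<in> PS"
  unfolding PS_def by (rule Poly_on_mono[OF loc_Poly_on]) auto




lemma feas_lin:
  assumes "LP_feasible c n mn"
  shows "\<forall>f\<in>Pn n. \<forall>g\<in>Pn n. \<forall>a b. mn (\<lambda>s. a * f s + b * g s) = a * mn f + b * mn g"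
  using assms unfolding LP_feasible_def by (elim conjE) assumption

lemma feas_pb:
  assumes "LP_feasible c n mn"
  shows "\<forall>u. mn (Fcyl (D n) u) \<ge> 0"
  using assms unfolding LP_feasible_def by (elim conjE) assumption

lemma feas_one:
  assumes "LP_feasible c n mn"
  shows "mn (\<lambda>s. 1) = 1"
  using assms unfolding LP_feasible_def by (elim conjE) assumption

lemma feas_sym:
  assumes "LP_feasible c n mn"
  shows "\<forall>A B. A \<subseteq> D n \<and> B \<subseteq> D n \<and> lat_equiv A B \<longrightarrow> mn (smono A) = mn (smono B)"
  using assms unfolding LP_feasible_def by (elim conjE) assumption

lemma feas_inv:
  assumes "LP_feasible c n mn"
  shows "\<forall>f\<in>Pn (n - 1). (\<Sum>i\<in>D (n - 1). mn (\<lambda>s. c i s * (f (flip i s) - f s))) = 0"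
  using assms unfolding LP_feasible_def by (elim conjE) assumption

context
  fixes c :: "'d::finite site \<Rightarrow> 'd config \<Rightarrow> real" and n :: nat
    and mn :: "('d config \<Rightarrow> real) \<Rightarrow> real"
  assumes F: "LP_feasible c n mn"
begin

lemma F_lin2: "loc (D n) f \<Longrightarrow> loc (D n) g \<Longrightarrow> mn (\<lambda>s. a * f s + b * g s) = a * mn f + b * mn g"
  using feas_lin[OF F] unfolding Pn_eq by simp

lemma F_zero: "mn (\<lambda>s. 0) = 0"
  using F_lin2[of "\<lambda>s. 1" "\<lambda>s. 1" 0 0] by (simp add: loc_const)

lemma F_sum:
  assumes "finite I" "\<forall>x\<in>I. loc (D n) (g x)"
  shows "mn (\<lambda>s. \<Sum>x\<in>I. a x * g x s) = (\<Sum>x\<in>I. a x * mn (g x))"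
  using assms
proof (induction I rule: finite_induct)
  case empty then show ?case by (simp add: F_zero)
next
  case (insert x I)
  have l: "loc (D n) (\<lambda>s. \<Sum>x\<in>I. a x * g x s)" using insert by (intro loc_lin) auto
  have "mn (\<lambda>s. \<Sum>x\<in>insert x I. a x * g x s) = mn (\<lambda>s. a x * g x s + 1 * (\<Sum>x\<in>I. a x * g x s))"
    using insert by simp
  also have "\<dots> = a x * mn (g x) + 1 * mn (\<lambda>s. \<Sum>x\<in>I. a x * g x s)"
    using insert l by (intro F_lin2) auto
  finally show ?case using insert by simp
qed

lemma F_expand: "loc (D n) f \<Longrightarrow> mn f = (\<Sum>u\<in>UU (D n). f u * mn (Fcyl (D n) u))"
proof -
  assume f: "loc (D n) f"
  have "f = (\<lambda>s. \<Sum>u\<in>UU (D n). f u * Fcyl (D n) u s)"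
    by (rule ext) (rule loc_expand[OF finite_D f])
  then have "mn f = mn (\<lambda>s. \<Sum>u\<in>UU (D n). f u * Fcyl (D n) u s)" by simp
  also have "\<dots> = (\<Sum>u\<in>UU (D n). f u * mn (Fcyl (D n) u))"
    by (rule F_sum) (auto simp: finite_UU finite_D loc_Fcyl)
  finally show ?thesis .
qed

lemma F_w_nonneg: "mn (Fcyl (D n) u) \<ge> 0"
  using feas_pb[OF F] by blast

lemma F_w_sum: "(\<Sum>u\<in>UU (D n). mn (Fcyl (D n) u)) = 1"
  using F_expand[of "\<lambda>s. 1"] feas_one[OF F] by (simp add: loc_const)

lemma F_nonneg: "loc (D n) f \<Longrightarrow> (\<And>s. f s \<ge> 0) \<Longrightarrow> mn f \<ge> 0"
  by (simp add: F_expand F_w_nonneg sum_nonneg)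

lemma F_bound: "loc (D n) f \<Longrightarrow> (\<And>s. \<bar>f s\<bar> \<le> B) \<Longrightarrow> \<bar>mn f\<bar> \<le> B"
proof -
  assume f: "loc (D n) f" and B: "\<And>s. \<bar>f s\<bar> \<le> B"
  have "\<bar>mn f\<bar> \<le> (\<Sum>u\<in>UU (D n). \<bar>f u * mn (Fcyl (D n) u)\<bar>)"
    unfolding F_expand[OF f] by (rule sum_abs)
  also have "\<dots> \<le> (\<Sum>u\<in>UU (D n). B * mn (Fcyl (D n) u))"
    by (intro sum_mono) (simp add: abs_mult F_w_nonneg B mult_right_mono)
  also have "\<dots> = B" by (simp add: sum_distrib_left[symmetric] F_w_sum)
  finally show ?thesis .
qed

end

lemma flip_agree: "i \<notin> L \<Longrightarrow> \<forall>j\<in>L. flip i s j = s j"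
  by (auto simp: flip_def)

lemma loc_flip_eq:
  assumes "loc L f" "i \<notin> L" shows "f (flip i s) = f s"
proof -
  have "(\<forall>j\<in>L. flip i s j = s j) \<longrightarrow> f (flip i s) = f s"
    by (rule spec[OF spec[OF assms(1)[unfolded loc_def]]])
  then show ?thesis using flip_agree[OF assms(2)] by blast
qed

lemma feas_Suc:
  fixes c :: "'d::finite site \<Rightarrow> 'd config \<Rightarrow> real"
  assumes F: "LP_feasible c (Suc n) mn"
  shows "LP_feasible c n (mn :: ('d::finite config \<Rightarrow> real) \<Rightarrow> real)"
proof -
  have DS: "D n \<subseteq> D (Suc n)" by (rule D_mono) simp
  have D1: "D (n - 1) \<subseteq> D n" by (rule D_mono) simp
  have lin: "\<forall>f\<in>Pn n. \<forall>g\<in>Pn n. \<forall>a b. mn (\<lambda>s. a * f s + b * g s) = a * mn f + b * mn g"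
    unfolding Pn_eq mem_Collect_eq
    by (intro ballI allI F_lin2[OF F] loc_mono[OF _ DS]) auto
  have pb: "\<forall>u. mn (Fcyl (D n) u) \<ge> 0"
  proof
    fix u show "mn (Fcyl (D n) u) \<ge> 0"
      by (rule F_nonneg[OF F loc_mono[OF loc_Fcyl[OF finite_D] DS]]) (rule Fcyl_nonneg[OF finite_D])
  qed
  have sym: "\<forall>A B. A \<subseteq> D n \<and> B \<subseteq> D n \<and> lat_equiv A B \<longrightarrow> mn (smono A) = mn (smono B)"
  proof (intro allI impI, elim conjE)
    fix A B :: "'d site set" assume "A \<subseteq> D n" "B \<subseteq> D n" "lat_equiv A B"
    then show "mn (smono A) = mn (smono B)"
      using feas_sym[OF F, rule_format, of A B] DS by auto
  qed
  have inv: "(\<Sum>i\<in>D (n - 1). mn (\<lambda>s. c i s * (f (flip i s) - f s))) = 0" if f: "f \<in> Pn (n - 1)" for f :: "'d config \<Rightarrow> real"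
  proof -
    have fl: "loc (D (n - 1)) f" using f by (simp add: Pn_eq)
    have "f \<in> Pn (Suc n - 1)" using loc_mono[OF fl D1] by (simp add: Pn_eq)
    then have "(\<Sum>i\<in>D (Suc n - 1). mn (\<lambda>s. c i s * (f (flip i s) - f s))) = 0"
      using feas_inv[OF F] by blast
    moreover have "(\<Sum>i\<in>D (n - 1). mn (\<lambda>s. c i s * (f (flip i s) - f s)))
        = (\<Sum>i\<in>D n. mn (\<lambda>s. c i s * (f (flip i s) - f s)))"
    proof (rule sum.mono_neutral_left[OF finite_D D1], rule ballI)
      fix i :: "'d site" assume "i \<in> D n - D (n - 1)"
      then have "(\<lambda>s. c i s * (f (flip i s) - f s)) = (\<lambda>s. 0)"
        using loc_flip_eq[OF fl] by auto
      then show "mn (\<lambda>s. c i s * (f (flip i s) - f s)) = 0" using F_zero[OF F] by simp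
    qed
    ultimately show ?thesis by simp
  qed
  show ?thesis unfolding LP_feasible_def
    by (intro conjI lin pb sym feas_one[OF F] ballI inv)
qed

lemma feas_le:
  fixes c :: "'d::finite site \<Rightarrow> 'd config \<Rightarrow> real"
  assumes "n \<le> n'" "LP_feasible c n' mn"
  shows "LP_feasible c n (mn :: ('d::finite config \<Rightarrow> real) \<Rightarrow> real)"
  using assms
proof (induction n' rule: dec_induct)
  case base then show ?case by simp
next
  case (step k) from step.IH[OF feas_Suc[OF step.prems]] show ?case .
qed




lemma loc_app: "loc L f \<Longrightarrow> (\<forall>i\<in>L. s i = s' i) \<Longrightarrow> f s = f s'"
  unfolding loc_def by blast

lemma loc_rep: "loc L f \<Longrightarrow> f (rep L s) = f s"
  by (erule loc_app) (simp add: rep_def)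

lemma loc_bound:
  assumes L: "finite L" and f: "loc L f"
  shows "\<bar>f s\<bar> \<le> (\<Sum>u\<in>UU L. \<bar>f u\<bar>)"
proof -
  have "\<bar>f (rep L s)\<bar> \<le> (\<Sum>u\<in>UU L. \<bar>f u\<bar>)"
    by (rule member_le_sum[of "rep L s" "UU L" "\<lambda>u. \<bar>f u\<bar>"]) (auto simp: rep_UU finite_UU[OF L])
  then show ?thesis using loc_rep[OF f] by simp
qed

lemma loc_comb:
  fixes L :: "'d site set"
  assumes "loc L f" "loc L g" shows "loc L (\<lambda>s. F (f s) (g s))"
  unfolding loc_def
proof (intro allI impI)
  fix s s' :: "'d config" assume a: "\<forall>i\<in>L. s i = s' i"
  show "F (f s) (g s) = F (f s') (g s')" using loc_app[OF assms(1) a] loc_app[OF assms(2) a] by simp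
qed

lemma loc_flip: fixes L :: "'d site set" assumes "loc L f" shows "loc (insert i L) (\<lambda>s. f (flip i s))"
  unfolding loc_def
proof (intro allI impI)
  fix s s' :: "'d config" assume a: "\<forall>j\<in>insert i L. s j = s' j"
  have "\<forall>j\<in>L. flip i s j = flip i s' j" using a by (auto simp: flip_def)
  then show "f (flip i s) = f (flip i s')" by (rule loc_app[OF assms])
qed

lemma smono_abs: "\<bar>smono A s\<bar> = 1"
  unfolding smono_def abs_prod by (rule prod.neutral) (simp add: spin_def)

lemma Bseq_conv_subseq:
  fixes Y :: "nat \<Rightarrow> real"
  assumes "Bseq Y" shows "\<exists>r. strict_mono r \<and> convergent (Y \<circ> r)"
proof -
  obtain f where f: "strict_mono f" "monoseq (\<lambda>n. Y (f n))" using seq_monosub by blast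
  have "Bseq (\<lambda>n. Y (f n))" using assms unfolding Bseq_def by auto
  then have "convergent (\<lambda>n. Y (f n))" using f(2) Bseq_monoseq_convergent by blast
  then show ?thesis using f(1) by (auto simp: o_def)
qed

lemma diag_exists:
  assumes ex: "\<And>k s. strict_mono (s::nat\<Rightarrow>nat) \<Longrightarrow> \<exists>r'. strict_mono r' \<and> P k (s \<circ> r')"
    and stable: "\<And>r s k. strict_mono r \<Longrightarrow> P k s \<Longrightarrow> P k (s \<circ> r)"
  shows "\<exists>q. strict_mono q \<and> (\<forall>k. P k (q \<circ> (+) (Suc k)))"
proof -
  interpret subseqs P using ex by unfold_locales
  show ?thesis using subseq_diagseq diagseq_holds[OF stable] by blast
qed

lemma countable_fin: "countable {A :: ('d::finite site) set. finite A}"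
  by (rule countable_Collect_finite)




locale LPseq =
  fixes c :: "'d::finite site \<Rightarrow> 'd config \<Rightarrow> real" and m :: nat and p :: "'d config \<Rightarrow> real"
    and mstar :: "nat \<Rightarrow> ('d config \<Rightarrow> real) \<Rightarrow> real"
  assumes ploc: "loc (D m) p"
    and opt: "\<forall>n\<ge>m. LP_optimal c p n (mstar n)"
begin

lemma feas: "m \<le> n \<Longrightarrow> LP_feasible c n (mstar n)"
  using opt unfolding LP_optimal_def by blast

lemma mono_p:
  assumes a: "m \<le> n" "n \<le> n'" shows "mstar n p \<le> mstar n' p"
proof -
  have "m \<le> n'" using a by simp
  then have "LP_feasible c n (mstar n')" using feas_le[OF a(2) feas] by blast
  moreover have "\<forall>m'. LP_feasible c n m' \<longrightarrow> mstar n p \<le> m' p"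
    using opt a(1) unfolding LP_optimal_def by blast
  ultimately show ?thesis by blast
qed

lemma bound_p:
  assumes "m \<le> n" shows "\<bar>mstar n p\<bar> \<le> (\<Sum>u\<in>UU (D m). \<bar>p u\<bar>)"
proof (rule F_bound[OF feas[OF assms]])
  show "loc (D n) p" using loc_mono[OF ploc D_mono[OF assms]] .
  show "\<And>s. \<bar>p s\<bar> \<le> (\<Sum>u\<in>UU (D m). \<bar>p u\<bar>)" by (rule loc_bound[OF finite_D ploc])
qed

lemma conv_p: "convergent (\<lambda>n. mstar n p)"
proof -
  have "incseq (\<lambda>k. mstar (k + m) p)"
    by (rule incseq_SucI) (rule mono_p, auto)
  then have "monoseq (\<lambda>k. mstar (k + m) p)" unfolding monoseq_def incseq_def by blast
  moreover have "Bseq (\<lambda>k. mstar (k + m) p)"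
    by (rule BseqI'[where K="\<Sum>u\<in>UU (D m). \<bar>p u\<bar>"]) (simp add: bound_p)
  ultimately have "convergent (\<lambda>k. mstar (k + m) p)" using Bseq_monoseq_convergent by blast
  then show ?thesis using convergent_ignore_initial_segment by blast
qed

lemma mono_bound:
  assumes "finite A" shows "\<exists>N. \<forall>n\<ge>N. \<bar>mstar n (smono A)\<bar> \<le> 1"
proof -
  obtain N0 where N0: "A \<subseteq> D N0" using D_exhaust[OF assms] by blast
  show ?thesis
  proof (intro exI allI impI)
    fix n assume n: "max N0 m \<le> n"
    show "\<bar>mstar n (smono A)\<bar> \<le> 1"
    proof (rule F_bound[OF feas])
      show "m \<le> n" using n by simp
      have "D N0 \<subseteq> D n" using n by (intro D_mono) simp
      then have "A \<subseteq> D n" using N0 by (rule subset_trans[rotated])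
      then show "loc (D n) (smono A)" by (rule loc_smono)
      show "\<And>s. \<bar>smono A s\<bar> \<le> 1" by (simp add: smono_abs)
    qed
  qed
qed

definition EE :: "nat \<Rightarrow> 'd site set" where
  "EE k = from_nat_into {A. finite A} k"

lemma EE_fin: "finite (EE k)"
proof -
  have ne: "{A :: 'd site set. finite A} \<noteq> {}" by auto
  show ?thesis using from_nat_into[OF ne, of k] unfolding EE_def by simp
qed

lemma EE_surj: "finite A \<Longrightarrow> \<exists>k. EE k = A"
  unfolding EE_def using from_nat_into_surj[OF countable_fin] by blast

lemma q_exists: "\<exists>q. strict_mono q \<and> (\<forall>A. finite A \<longrightarrow> convergent (\<lambda>i. mstar (q i) (smono A)))"
proof -
  define P where "P k s = convergent (\<lambda>i. mstar (s i) (smono (EE k)))" for k and s :: "nat \<Rightarrow> nat"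
  have ex: "\<exists>r'. strict_mono r' \<and> P k (s \<circ> r')" if s: "strict_mono s" for k and s :: "nat \<Rightarrow> nat"
  proof -
    obtain N where N: "\<forall>n\<ge>N. \<bar>mstar n (smono (EE k))\<bar> \<le> 1" using mono_bound[OF EE_fin] by blast
    have "Bseq (\<lambda>i. mstar (s (i + N)) (smono (EE k)))"
    proof (rule BseqI'[where K=1])
      fix i have "N \<le> s (i + N)" using seq_suble[OF s, of "i + N"] by simp
      then show "norm (mstar (s (i + N)) (smono (EE k))) \<le> 1" using N by simp
    qed
    then have "Bseq (\<lambda>i. mstar (s i) (smono (EE k)))" by (rule Bseq_offset)
    then obtain r where "strict_mono r" "convergent ((\<lambda>i. mstar (s i) (smono (EE k))) \<circ> r)"
      using Bseq_conv_subseq by blast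
    then show ?thesis unfolding P_def by (auto simp: o_def)
  qed
  have stable: "P k (s \<circ> r)" if "strict_mono r" "P k s" for r s :: "nat \<Rightarrow> nat" and k
    using convergent_subseq_convergent[of "\<lambda>i. mstar (s i) (smono (EE k))" r] that
    unfolding P_def by (simp add: o_def)
  obtain q where q: "strict_mono q" "\<forall>k. P k (q \<circ> (+) (Suc k))"
    using diag_exists[of P, OF ex stable] by blast
  have "convergent (\<lambda>i. mstar (q i) (smono A))" if A: "finite A" for A
  proof -
    obtain k where k: "EE k = A" using EE_surj[OF A] by blast
    have "convergent (\<lambda>i. mstar (q (i + Suc k)) (smono (EE k)))"
      using q(2) unfolding P_def by (simp add: o_def add.commute[of _ k])
    then show ?thesis using k convergent_ignore_initial_segment[of "\<lambda>i. mstar (q i) (smono A)" "Suc k"] by simp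
  qed
  then show ?thesis using q(1) by blast
qed

definition qq :: "nat \<Rightarrow> nat" where
  "qq = (SOME q. strict_mono q \<and> (\<forall>A. finite A \<longrightarrow> convergent (\<lambda>i. mstar (q i) (smono A))))"

lemma qq: "strict_mono qq" "finite A \<Longrightarrow> convergent (\<lambda>i. mstar (qq i) (smono A))"
  using someI_ex[OF q_exists] unfolding qq_def[symmetric] by blast+

definition LL :: "('d config \<Rightarrow> real) \<Rightarrow> real" where
  "LL f = lim (\<lambda>i. mstar (qq i) f)"

lemma ev_big:
  assumes "finite L" shows "\<exists>N. \<forall>i\<ge>N. m \<le> qq i \<and> L \<subseteq> D (qq i - 1) \<and> L \<subseteq> D (qq i)"
proof -
  obtain N0 where N0: "L \<subseteq> D N0" using D_exhaust[OF assms] by blast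
  show ?thesis
  proof (intro exI allI impI)
    fix i assume i: "N0 + m + 1 \<le> i"
    have "i \<le> qq i" by (rule seq_suble[OF qq(1)])
    then have a: "m \<le> qq i" "N0 \<le> qq i - 1" "N0 \<le> qq i" using i by auto
    show "m \<le> qq i \<and> L \<subseteq> D (qq i - 1) \<and> L \<subseteq> D (qq i)"
      using a N0 D_mono[OF a(2)] D_mono[OF a(3)] by blast
  qed
qed

lemma LL_tendsto:
  assumes L: "finite L" and f: "loc L f"
  shows "(\<lambda>i. mstar (qq i) f) \<longlonglongrightarrow> LL f"
proof -
  obtain \<A> a where A: "finite \<A>" "\<forall>A\<in>\<A>. finite A \<and> A \<subseteq> L" "f = (\<lambda>s. \<Sum>A\<in>\<A>. a A * smono A s)"
    using loc_Poly_on[OF L f] unfolding Poly_on_def by blast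
  have t: "(\<lambda>i. \<Sum>A\<in>\<A>. a A * mstar (qq i) (smono A)) \<longlonglongrightarrow> (\<Sum>A\<in>\<A>. a A * lim (\<lambda>i. mstar (qq i) (smono A)))"
    using A(2) by (intro tendsto_intros) (simp add: qq(2) convergent_LIMSEQ_iff[symmetric])
  obtain N where N: "\<forall>i\<ge>N. m \<le> qq i \<and> L \<subseteq> D (qq i - 1) \<and> L \<subseteq> D (qq i)"
    using ev_big[OF L] by blast
  have "\<forall>i\<ge>N. (\<Sum>A\<in>\<A>. a A * mstar (qq i) (smono A)) = mstar (qq i) f"
  proof (intro allI impI)
    fix i assume i: "N \<le> i"
    have "mstar (qq i) f = mstar (qq i) (\<lambda>s. \<Sum>A\<in>\<A>. a A * smono A s)" using A(3) by simp
    also have "\<dots> = (\<Sum>A\<in>\<A>. a A * mstar (qq i) (smono A))"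
    proof (rule F_sum[OF feas A(1)])
      show "m \<le> qq i" using N i by blast
      show "\<forall>x\<in>\<A>. loc (D (qq i)) (smono x)" using A(2) N i by (meson loc_smono order_trans)
    qed
    finally show "(\<Sum>A\<in>\<A>. a A * mstar (qq i) (smono A)) = mstar (qq i) f" by simp
  qed
  then have ev: "eventually (\<lambda>i. (\<Sum>A\<in>\<A>. a A * mstar (qq i) (smono A)) = mstar (qq i) f) sequentially"
    unfolding eventually_sequentially by blast
  have "(\<lambda>i. mstar (qq i) f) \<longlonglongrightarrow> (\<Sum>A\<in>\<A>. a A * lim (\<lambda>i. mstar (qq i) (smono A)))"
    by (rule Lim_transform_eventually[OF t ev])
  then have "convergent (\<lambda>i. mstar (qq i) f)" by (rule convergentI)
  then show ?thesis unfolding LL_def by (rule convergent_LIMSEQ_iff[THEN iffD1])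
qed

lemma LL_ev_eq:
  assumes "finite L" "loc L f" "finite L'" "loc L' g" "\<exists>N. \<forall>i\<ge>N. mstar (qq i) f = mstar (qq i) g"
  shows "LL f = LL g"
proof -
  have ev: "eventually (\<lambda>i. mstar (qq i) f = mstar (qq i) g) sequentially"
    using assms(5) unfolding eventually_sequentially .
  have "(\<lambda>i. mstar (qq i) g) \<longlonglongrightarrow> LL f"
    by (rule Lim_transform_eventually[OF LL_tendsto[OF assms(1,2)] ev])
  then show ?thesis using LL_tendsto[OF assms(3,4)] LIMSEQ_unique by blast
qed

lemma LL_lin:
  assumes I: "finite I" and L: "finite L" and g: "\<forall>x\<in>I. loc L (g x)"
  shows "LL (\<lambda>s. \<Sum>x\<in>I. a x * g x s) = (\<Sum>x\<in>I. a x * LL (g x))"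
proof -
  have t1: "(\<lambda>i. mstar (qq i) (\<lambda>s. \<Sum>x\<in>I. a x * g x s)) \<longlonglongrightarrow> LL (\<lambda>s. \<Sum>x\<in>I. a x * g x s)"
    by (rule LL_tendsto[OF L loc_lin[OF g]])
  have t2: "(\<lambda>i. \<Sum>x\<in>I. a x * mstar (qq i) (g x)) \<longlonglongrightarrow> (\<Sum>x\<in>I. a x * LL (g x))"
    using g by (intro tendsto_intros LL_tendsto[OF L]) simp
  obtain N where N: "\<forall>i\<ge>N. m \<le> qq i \<and> L \<subseteq> D (qq i - 1) \<and> L \<subseteq> D (qq i)"
    using ev_big[OF L] by blast
  have "\<forall>i\<ge>N. (\<Sum>x\<in>I. a x * mstar (qq i) (g x)) = mstar (qq i) (\<lambda>s. \<Sum>x\<in>I. a x * g x s)"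
  proof (intro allI impI)
    fix i assume i: "N \<le> i"
    show "(\<Sum>x\<in>I. a x * mstar (qq i) (g x)) = mstar (qq i) (\<lambda>s. \<Sum>x\<in>I. a x * g x s)"
    proof (rule F_sum[OF feas I, symmetric])
      show "m \<le> qq i" using N i by blast
      show "\<forall>x\<in>I. loc (D (qq i)) (g x)" using g N i loc_mono by blast
    qed
  qed
  then have ev: "eventually (\<lambda>i. (\<Sum>x\<in>I. a x * mstar (qq i) (g x)) = mstar (qq i) (\<lambda>s. \<Sum>x\<in>I. a x * g x s)) sequentially"
    unfolding eventually_sequentially by blast
  have "(\<lambda>i. mstar (qq i) (\<lambda>s. \<Sum>x\<in>I. a x * g x s)) \<longlonglongrightarrow> (\<Sum>x\<in>I. a x * LL (g x))"
    by (rule Lim_transform_eventually[OF t2 ev])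
  then show ?thesis using t1 LIMSEQ_unique by blast
qed

lemma LL_expand:
  assumes L: "finite L" and f: "loc L f"
  shows "LL f = (\<Sum>u\<in>UU L. f u * LL (Fcyl L u))"
proof -
  have "f = (\<lambda>s. \<Sum>u\<in>UU L. f u * Fcyl L u s)"
    by (rule ext) (rule loc_expand[OF L f])
  then have "LL f = LL (\<lambda>s. \<Sum>u\<in>UU L. f u * Fcyl L u s)" by simp
  also have "\<dots> = (\<Sum>u\<in>UU L. f u * LL (Fcyl L u))"
    by (rule LL_lin[OF finite_UU[OF L] L]) (simp add: loc_Fcyl[OF L])
  finally show ?thesis .
qed

lemma LL_Fcyl_nonneg:
  assumes L: "finite L" shows "LL (Fcyl L u) \<ge> 0"
proof (rule LIMSEQ_le_const[OF LL_tendsto[OF L loc_Fcyl[OF L]]])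
  obtain N where N: "\<forall>i\<ge>N. m \<le> qq i \<and> L \<subseteq> D (qq i - 1) \<and> L \<subseteq> D (qq i)"
    using ev_big[OF L] by blast
  show "\<exists>N. \<forall>n\<ge>N. 0 \<le> mstar (qq n) (Fcyl L u)"
  proof (intro exI allI impI)
    fix n assume n: "N \<le> n"
    show "0 \<le> mstar (qq n) (Fcyl L u)"
    proof (rule F_nonneg[OF feas])
      show "m \<le> qq n" using N n by blast
      show "loc (D (qq n)) (Fcyl L u)" using loc_mono[OF loc_Fcyl[OF L]] N n by blast
      show "\<And>s. 0 \<le> Fcyl L u s" by (rule Fcyl_nonneg[OF L])
    qed
  qed
qed

lemma LL_one: "LL (\<lambda>s. 1) = 1"
proof -
  have "(\<lambda>i. mstar (qq i) (\<lambda>s. 1)) \<longlonglongrightarrow> 1"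
  proof (rule Lim_transform_eventually[OF tendsto_const])
    obtain N where N: "\<forall>i\<ge>N. m \<le> qq i \<and> {} \<subseteq> D (qq i - 1) \<and> {} \<subseteq> D (qq i)"
      using ev_big[of "{}"] by blast
    then show "\<forall>\<^sub>F x in sequentially. 1 = mstar (qq x) (\<lambda>s. 1)"
      unfolding eventually_sequentially using feas_one[OF feas] by metis
  qed
  then show ?thesis unfolding LL_def by (rule limI)
qed

lemma LL_wsum: "finite L \<Longrightarrow> (\<Sum>u\<in>UU L. LL (Fcyl L u)) = 1"
  using LL_expand[of L "\<lambda>s. 1"] LL_one by (simp add: loc_const)

lemma LL_consist:
  assumes H: "finite H" and JH: "J \<subseteq> H" and u: "u \<in> UU J"
  shows "LL (Fcyl J u) = (\<Sum>v\<in>{v\<in>UU H. rep J v = u}. LL (Fcyl H v))"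
proof -
  have J: "finite J" using H JH by (rule finite_subset[rotated])
  have "LL (Fcyl J u) = (\<Sum>v\<in>UU H. Fcyl J u v * LL (Fcyl H v))"
    by (rule LL_expand[OF H loc_mono[OF loc_Fcyl[OF J] JH]])
  also have "\<dots> = (\<Sum>v\<in>UU H. if rep J v = u then LL (Fcyl H v) else 0)"
  proof (rule sum.cong[OF refl])
    fix v assume "v \<in> UU H"
    have "(\<forall>i\<in>J. v i = u i) \<longleftrightarrow> rep J v = u"
      using u by (auto simp: UU_def rep_def fun_eq_iff)
    then show "Fcyl J u v * LL (Fcyl H v) = (if rep J v = u then LL (Fcyl H v) else 0)"
      by (simp add: Fcyl_eq[OF J])
  qed
  also have "\<dots> = (\<Sum>v\<in>{v\<in>UU H. rep J v = u}. LL (Fcyl H v))"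
    by (rule sum.inter_filter[OF finite_UU[OF H], symmetric])
  finally show ?thesis .
qed

end



lemma space_spinM: "space spinM = UNIV"
  by (simp add: spinM_def space_PiM)

lemma cyl_sets: "finite L \<Longrightarrow> {s. \<forall>i\<in>L. s i = u i} \<in> sets spinM"
proof -
  assume L: "finite L"
  have "{s \<in> space spinM. \<forall>i\<in>L. s i = u i} \<in> sets spinM"
  proof (rule sets.sets_Collect_finite_All[OF _ L])
    fix i show "{s \<in> space spinM. s i = u i} \<in> sets spinM"
      unfolding spinM_def by measurable
  qed
  then show ?thesis by (simp add: space_spinM)
qed

lemma Fcyl_ind: "finite (L :: 'd::finite site set) \<Longrightarrow> Fcyl L u s = indicator {s. \<forall>i\<in>L. s i = u i} s"
  by (simp add: Fcyl_eq indicator_def)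

lemma loc_ind:
  fixes L :: "'d::finite site set"
  assumes L: "finite L" and g: "loc L g"
  shows "g s = (\<Sum>u\<in>UU L. g u * indicator {s. \<forall>i\<in>L. s i = u i} s)"
  using loc_expand[OF L g, of s] by (simp add: Fcyl_ind[OF L])

lemma loc_meas:
  fixes L :: "'d::finite site set"
  assumes L: "finite L" and g: "loc L g" and M: "sets M = sets spinM"
  shows "g \<in> borel_measurable M"
proof -
  have "(\<lambda>s. \<Sum>u\<in>UU L. g u * indicator {s. \<forall>i\<in>L. s i = u i} s) \<in> borel_measurable M"
    using cyl_sets[OF L] M by (intro borel_measurable_sum borel_measurable_times borel_measurable_indicator borel_measurable_const) auto
  moreover have "g = (\<lambda>s. \<Sum>u\<in>UU L. g u * indicator {s. \<forall>i\<in>L. s i = u i} s)"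
    by (rule ext) (rule loc_ind[OF L g])
  ultimately show ?thesis by simp
qed

context LPseq begin

definition ww :: "'d site set \<Rightarrow> 'd config \<Rightarrow> real" where
  "ww L u = (if u \<in> UU L then LL (Fcyl L u) else 0)"

lemma ww_nonneg: "finite L \<Longrightarrow> ww L u \<ge> 0"
  by (simp add: ww_def LL_Fcyl_nonneg)

lemma ww_int:
  assumes L: "finite L" shows "(\<integral>\<^sup>+x. ennreal (ww L x) \<partial>count_space UNIV) = 1"
proof -
  have "(\<integral>\<^sup>+x. ennreal (ww L x) \<partial>count_space UNIV)
      = (\<integral>\<^sup>+x. ennreal (ww L x) * indicator (UU L) x \<partial>count_space UNIV)"
    by (rule nn_integral_cong) (simp add: ww_def indicator_def)
  also have "\<dots> = (\<integral>\<^sup>+x. ennreal (ww L x) \<partial>count_space (UU L))"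
    by (rule nn_integral_count_space_indicator[symmetric]) (simp add: NO_MATCH_def)
  also have "\<dots> = (\<Sum>x\<in>UU L. ennreal (ww L x))"
    by (rule nn_integral_count_space_finite[OF finite_UU[OF L]])
  also have "\<dots> = ennreal (\<Sum>x\<in>UU L. ww L x)"
    by (rule sum_ennreal) (simp add: ww_nonneg[OF L])
  also have "(\<Sum>x\<in>UU L. ww L x) = 1"
    using LL_wsum[OF L] by (simp add: ww_def)
  finally show ?thesis by simp
qed

definition pi :: "'d site set \<Rightarrow> 'd config pmf" where
  "pi L = embed_pmf (ww L)"

lemma pmf_pi: "finite L \<Longrightarrow> pmf (pi L) u = ww L u"
  unfolding pi_def by (rule pmf_embed_pmf[OF ww_nonneg ww_int])

lemma set_pi: "finite L \<Longrightarrow> set_pmf (pi L) \<subseteq> UU L"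
  unfolding pi_def by (subst set_embed_pmf[OF ww_nonneg ww_int]) (auto simp: ww_def)

lemma measure_pi:
  assumes L: "finite L" shows "measure_pmf.prob (pi L) X = (\<Sum>u\<in>X \<inter> UU L. ww L u)"
proof -
  have "measure_pmf.prob (pi L) X = measure_pmf.prob (pi L) (X \<inter> set_pmf (pi L))"
    by (simp add: measure_Int_set_pmf)
  also have "X \<inter> set_pmf (pi L) = (X \<inter> UU L) \<inter> set_pmf (pi L)" using set_pi[OF L] by auto
  also have "measure_pmf.prob (pi L) \<dots> = measure_pmf.prob (pi L) (X \<inter> UU L)"
    by (simp add: measure_Int_set_pmf)
  also have "\<dots> = sum (pmf (pi L)) (X \<inter> UU L)"
    by (rule measure_measure_pmf_finite) (simp add: finite_UU[OF L])
  finally show ?thesis by (simp add: pmf_pi[OF L])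
qed

lemma pi_map:
  assumes H: "finite H" and JH: "J \<subseteq> H" shows "pi J = map_pmf (rep J) (pi H)"
proof (rule pmf_eqI)
  fix u
  have J: "finite J" using H JH by (rule finite_subset[rotated])
  have "pmf (map_pmf (rep J) (pi H)) u = measure_pmf.prob (pi H) (rep J -` {u})" by (rule pmf_map)
  also have "\<dots> = (\<Sum>v\<in>rep J -` {u} \<inter> UU H. ww H v)" by (rule measure_pi[OF H])
  also have "\<dots> = ww J u"
  proof (cases "u \<in> UU J")
    case True
    have "rep J -` {u} \<inter> UU H = {v\<in>UU H. rep J v = u}" by auto
    then have "(\<Sum>v\<in>rep J -` {u} \<inter> UU H. ww H v) = (\<Sum>v\<in>{v\<in>UU H. rep J v = u}. LL (Fcyl H v))"
      by (simp add: ww_def)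
    also have "\<dots> = LL (Fcyl J u)" by (rule LL_consist[OF H JH True, symmetric])
    finally show ?thesis using True by (simp add: ww_def)
  next
    case False
    have "rep J -` {u} \<inter> UU H = {}" using False rep_UU[of J] by blast
    then show ?thesis using False by (simp add: ww_def)
  qed
  finally show "pmf (pi J) u = pmf (map_pmf (rep J) (pi H)) u" by (simp add: pmf_pi[OF J])
qed

definition phi :: "'d site set \<Rightarrow> 'd config \<Rightarrow> ('d site \<Rightarrow> real)" where
  "phi J u = restrict (\<lambda>i. spin u i) J"

definition PP :: "'d site set \<Rightarrow> ('d site \<Rightarrow> real) measure" where
  "PP J = distr (measure_pmf (pi J)) (PiM J (\<lambda>_. borel)) (phi J)"

lemma phi_meas: "phi J \<in> measure_pmf M \<rightarrow>\<^sub>M PiM J (\<lambda>_. borel :: real measure)"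
  by (simp add: measurable_pmf_measure1 phi_def space_PiM)

lemma phi_meas2: "phi J \<in> count_space UNIV \<rightarrow>\<^sub>M PiM J (\<lambda>_. borel :: real measure)"
  by (simp add: measurable_count_space_eq1 phi_def space_PiM)

lemma PP_proj:
  assumes JH: "J \<subseteq> H" and H: "finite H"
  shows "PP J = distr (PP H) (PiM J (\<lambda>_. borel)) (\<lambda>f. restrict f J)"
proof -
  have "distr (PP H) (PiM J (\<lambda>_. borel)) (\<lambda>f. restrict f J)
      = distr (measure_pmf (pi H)) (PiM J (\<lambda>_. borel)) ((\<lambda>f. restrict f J) \<circ> phi H)"
    unfolding PP_def by (rule distr_distr[OF measurable_restrict_subset[OF JH] phi_meas])
  also have "(\<lambda>f. restrict f J) \<circ> phi H = phi J \<circ> rep J"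
    using JH by (auto simp: phi_def rep_def spin_def fun_eq_iff restrict_def)
  also have "distr (measure_pmf (pi H)) (PiM J (\<lambda>_. borel)) (phi J \<circ> rep J)
      = distr (distr (measure_pmf (pi H)) (count_space UNIV) (rep J)) (PiM J (\<lambda>_. borel)) (phi J)"
    by (rule distr_distr[symmetric, OF phi_meas2]) (simp add: measurable_pmf_measure1)
  also have "distr (measure_pmf (pi H)) (count_space UNIV) (rep J) = measure_pmf (pi J)"
    using pi_map[OF H JH] by (simp add: map_pmf_rep_eq)
  finally have "distr (PP H) (PiM J (\<lambda>_. borel)) (\<lambda>f. restrict f J) = PP J"
    unfolding PP_def .
  then show ?thesis by simp
qed

lemma PP_prob: "prob_space (PP J)"
  unfolding PP_def by (rule measure_pmf.prob_space_distr[OF phi_meas])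

lemma pp: "polish_projective UNIV PP"
  unfolding polish_projective_def
proof (rule projective_family.intro)
  fix J H :: "'d site set" assume "J \<subseteq> H" "finite H" "H \<subseteq> UNIV"
  then show "PP J = distr (PP H) (PiM J (\<lambda>_. borel)) (\<lambda>f. restrict f J)" by (intro PP_proj)
next
  fix J :: "'d site set" show "prob_space (PP J)" by (rule PP_prob)
qed

definition PLIM :: "('d site \<Rightarrow> real) measure" where
  "PLIM = projective_family.lim UNIV PP (\<lambda>_. borel :: real measure)"

lemma sets_PLIM: "sets PLIM = sets (PiM UNIV (\<lambda>_. borel :: real measure))"
proof -
  interpret polish_projective UNIV PP by (rule pp)
  show ?thesis unfolding PLIM_def by (rule sets_lim)
qed

lemma prob_PLIM: "prob_space PLIM"
proof -
  interpret polish_projective UNIV PP by (rule pp)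
  show ?thesis unfolding PLIM_def by (rule P.prob_space_axioms)
qed

definition tob :: "('d site \<Rightarrow> real) \<Rightarrow> 'd config" where
  "tob x = (\<lambda>i. 0 < x i)"

lemma tob_meas: "tob \<in> PLIM \<rightarrow>\<^sub>M spinM"
proof -
  have "\<And>i. (\<lambda>x::'d site \<Rightarrow> real. 0 < x i) \<in> PiM UNIV (\<lambda>_. borel) \<rightarrow>\<^sub>M count_space UNIV"
    by measurable
  then have "(\<lambda>x::'d site \<Rightarrow> real. \<lambda>i. 0 < x i) \<in> PiM UNIV (\<lambda>_. borel) \<rightarrow>\<^sub>M PiM UNIV (\<lambda>_. count_space UNIV)"
    by (intro measurable_PiM_single'[where f="\<lambda>i x. 0 < x i"]) auto
  then show ?thesis unfolding tob_def spinM_def using measurable_cong_sets[OF sets_PLIM refl] by blast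
qed

definition MU :: "'d config measure" where
  "MU = distr PLIM spinM tob"

lemma MU_prob: "prob_space MU"
  unfolding MU_def by (rule prob_space.prob_space_distr[OF prob_PLIM tob_meas])

lemma sets_MU: "sets MU = sets spinM"
  unfolding MU_def by simp

lemma space_MU: "space MU = UNIV"
  unfolding MU_def by (simp add: space_spinM)

end



context LPseq begin

lemma MU_cyl:
  assumes L: "finite L" and u: "u \<in> UU L"
  shows "measure MU {s. \<forall>i\<in>L. s i = u i} = LL (Fcyl L u)"
proof -
  interpret polish_projective UNIV PP by (rule pp)
  define C where "C = {s::'d config. \<forall>i\<in>L. s i = u i}"
  define X where "X = PiE L (\<lambda>i. if u i then {0<..} else {..(0::real)})"
  have X: "X \<in> sets (PiM L (\<lambda>_. borel))" unfolding X_def by (rule sets_PiM_I_finite[OF L]) auto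
  have spL: "space PLIM = UNIV"
    using sets_eq_imp_space_eq[OF sets_PLIM] by (simp add: space_PiM)
  have "measure MU C = measure PLIM (tob -` C \<inter> space PLIM)"
    unfolding MU_def by (rule measure_distr[OF tob_meas]) (simp add: C_def cyl_sets[OF L])
  also have "tob -` C \<inter> space PLIM = prod_emb UNIV (\<lambda>_. borel) L X"
    unfolding prod_emb_def spL by (auto simp: C_def X_def tob_def PiE_iff space_PiM split: if_splits) (metis linorder_not_le)+
  also have "measure PLIM (prod_emb UNIV (\<lambda>_. borel) L X) = measure (PP L) X"
    unfolding PLIM_def by (rule measure_lim_emb) (auto simp: L X)
  also have "measure (PP L) X = measure (pi L) (phi L -` X \<inter> space (measure_pmf (pi L)))"
    unfolding PP_def by (rule measure_distr[OF phi_meas X])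
  also have "phi L -` X \<inter> space (measure_pmf (pi L)) = C"
    by (auto simp: phi_def X_def C_def spin_def PiE_iff split: if_splits)
  also have "measure (pi L) C = LL (Fcyl L u)"
  proof -
    have "C \<inter> UU L = {u}" using u by (auto simp: C_def UU_def fun_eq_iff)
    then show ?thesis by (simp add: measure_pi[OF L] ww_def u)
  qed
  finally show ?thesis by (simp add: C_def)
qed

lemma MU_integral:
  assumes L: "finite L" and g: "loc L g"
  shows "(\<integral>s. g s \<partial>MU) = LL g"
proof -
  interpret M: prob_space MU by (rule MU_prob)
  have cs: "{s. \<forall>i\<in>L. s i = u i} \<in> sets MU" for u using cyl_sets[OF L] by (simp add: sets_MU)
  have "(\<integral>s. g s \<partial>MU) = (\<integral>s. (\<Sum>u\<in>UU L. g u * indicator {s. \<forall>i\<in>L. s i = u i} s) \<partial>MU)"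
    by (rule Bochner_Integration.integral_cong[OF refl]) (rule loc_ind[OF L g])
  also have "\<dots> = (\<Sum>u\<in>UU L. (\<integral>s. g u * indicator {s. \<forall>i\<in>L. s i = u i} s \<partial>MU))"
    by (rule Bochner_Integration.integral_sum) (auto intro!: integrable_mult_right integrable_real_indicator cs simp: M.emeasure_finite less_top[symmetric])
  also have "\<dots> = (\<Sum>u\<in>UU L. g u * measure MU {s. \<forall>i\<in>L. s i = u i})"
    by (simp add: space_MU)
  also have "\<dots> = (\<Sum>u\<in>UU L. g u * LL (Fcyl L u))"
    by (intro sum.cong refl) (simp add: MU_cyl[OF L])
  also have "\<dots> = LL g" by (rule LL_expand[OF L g, symmetric])
  finally show ?thesis .
qed

end



context LPseq begin

lemma MU_sym: "lattice_symmetric MU"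
  unfolding lattice_symmetric_def
proof (intro allI impI, elim conjE)
  fix A :: "'d site set" and g :: "'d site \<Rightarrow> 'd site" assume A: "finite A" and g: "g \<in> latG"
  have gA: "finite (g ` A)" using A by simp
  have "(\<integral>s. smono A s \<partial>MU) = LL (smono A)" by (rule MU_integral[OF A loc_smono[OF subset_refl]])
  also have "LL (smono A) = LL (smono (g ` A))"
  proof (rule LL_ev_eq[OF A loc_smono[OF subset_refl] gA loc_smono[OF subset_refl]])
    have AgA: "finite (A \<union> g ` A)" using A gA by simp
    obtain N where N: "\<forall>i\<ge>N. m \<le> qq i \<and> A \<union> g ` A \<subseteq> D (qq i - 1) \<and> A \<union> g ` A \<subseteq> D (qq i)"
      using ev_big[OF AgA] by blast
    show "\<exists>N. \<forall>i\<ge>N. mstar (qq i) (smono A) = mstar (qq i) (smono (g ` A))"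
    proof (intro exI allI impI)
      fix i assume i: "N \<le> i"
      have le: "lat_equiv A (g ` A)" unfolding lat_equiv_def using g by blast
      have fi: "LP_feasible c (qq i) (mstar (qq i))" using N i feas by blast
      have sub: "A \<subseteq> D (qq i)" "g ` A \<subseteq> D (qq i)" using N i by auto
      show "mstar (qq i) (smono A) = mstar (qq i) (smono (g ` A))"
        using feas_sym[OF fi] sub le by blast
    qed
  qed
  also have "\<dots> = (\<integral>s. smono (g ` A) s \<partial>MU)" by (rule MU_integral[OF gA loc_smono[OF subset_refl], symmetric])
  finally show "(\<integral>s. smono A s \<partial>MU) = (\<integral>s. smono (g ` A) s \<partial>MU)" .
qed

lemma MU_inv:
  assumes cloc: "\<And>i. loc (insert i (nbr i)) (c i)"
  shows "invariant c MU"
  unfolding invariant_def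
proof
  fix f :: "'d config \<Rightarrow> real" assume "f \<in> PS"
  then obtain L where L: "finite L" "loc L f" using PS_loc by blast
  define Z where "Z = {i. \<exists>s. f (flip i s) \<noteq> f s}"
  have ZL: "Z \<subseteq> L" unfolding Z_def using loc_flip_eq[OF L(2)] by blast
  define h where "h i = (\<lambda>s. c i s * (f (flip i s) - f s))" for i
  have hl: "loc (insert i (nbr i) \<union> insert i L) (h i)" for i
  proof -
    have a: "loc (insert i (nbr i) \<union> insert i L) (c i)" by (rule loc_mono[OF cloc]) auto
    have b: "loc (insert i (nbr i) \<union> insert i L) (\<lambda>s. f (flip i s))" by (rule loc_mono[OF loc_flip[OF L(2)]]) auto
    have d: "loc (insert i (nbr i) \<union> insert i L) f" by (rule loc_mono[OF L(2)]) auto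
    have e: "loc (insert i (nbr i) \<union> insert i L) (\<lambda>s. f (flip i s) - f s)" by (rule loc_comb[OF b d])
    show ?thesis unfolding h_def by (rule loc_comb[OF a e])
  qed
  have hf: "finite (insert i (nbr i) \<union> insert i L)" for i using L(1) finite_nbr by simp
  have "(\<Sum>i\<in>Z. \<integral>s. h i s \<partial>MU) = (\<Sum>i\<in>Z. LL (h i))" by (intro sum.cong refl MU_integral[OF hf hl])
  also have "\<dots> = 0"
  proof -
    have t: "(\<lambda>k. \<Sum>i\<in>Z. mstar (qq k) (h i)) \<longlonglongrightarrow> (\<Sum>i\<in>Z. LL (h i))"
      by (intro tendsto_sum LL_tendsto[OF hf hl])
    obtain N where N: "\<forall>k\<ge>N. m \<le> qq k \<and> L \<subseteq> D (qq k - 1) \<and> L \<subseteq> D (qq k)"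
      using ev_big[OF L(1)] by blast
    have "\<forall>k\<ge>N. 0 = (\<Sum>i\<in>Z. mstar (qq k) (h i))"
    proof (intro allI impI)
      fix k assume k: "N \<le> k"
      have fk: "LP_feasible c (qq k) (mstar (qq k))" using N k feas by blast
      have LD: "L \<subseteq> D (qq k - 1)" using N k by blast
      have fP: "f \<in> Pn (qq k - 1)" using loc_mono[OF L(2) LD] by (simp add: Pn_eq)
      have "(\<Sum>i\<in>D (qq k - 1). mstar (qq k) (h i)) = 0" using feas_inv[OF fk] fP unfolding h_def by blast
      moreover have "(\<Sum>i\<in>Z. mstar (qq k) (h i)) = (\<Sum>i\<in>D (qq k - 1). mstar (qq k) (h i))"
      proof (rule sum.mono_neutral_left[OF finite_D])
        show "Z \<subseteq> D (qq k - 1)" using ZL LD by blast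
        show "\<forall>i\<in>D (qq k - 1) - Z. mstar (qq k) (h i) = 0"
        proof
          fix i assume "i \<in> D (qq k - 1) - Z"
          then have "h i = (\<lambda>s. 0)" unfolding h_def Z_def by auto
          then show "mstar (qq k) (h i) = 0" using F_zero[OF fk] by simp
        qed
      qed
      ultimately show "0 = (\<Sum>i\<in>Z. mstar (qq k) (h i))" by simp
    qed
    then have ev: "eventually (\<lambda>k. 0 = (\<Sum>i\<in>Z. mstar (qq k) (h i))) sequentially"
      unfolding eventually_sequentially by blast
    have "(\<lambda>k. \<Sum>i\<in>Z. mstar (qq k) (h i)) \<longlonglongrightarrow> 0"
      by (rule Lim_transform_eventually[OF tendsto_const ev])
    then show ?thesis using t LIMSEQ_unique by blast
  qed
  finally show "(\<Sum>i\<in>{i. \<exists>s. f (flip i s) \<noteq> f s}. \<integral>s. c i s * (f (flip i s) - f s) \<partial>MU) = 0"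
    unfolding Z_def h_def .
qed

end

lemma integral_feasible:
  fixes c :: "'d::finite site \<Rightarrow> 'd config \<Rightarrow> real"
  assumes cloc: "\<And>i. loc (insert i (nbr i)) (c i)"
    and P: "is_prob_on_S \<mu>" and S: "lattice_symmetric \<mu>" and I: "invariant c \<mu>"
  shows "LP_feasible c n (\<lambda>f. \<integral>s. f s \<partial>\<mu>)"
proof -
  interpret M: prob_space \<mu> using P unfolding is_prob_on_S_def by blast
  have sets: "sets \<mu> = sets spinM" using P unfolding is_prob_on_S_def by blast
  have intg: "integrable \<mu> f" if "finite L" "loc L f" for L :: "'d site set" and f
  proof (rule M.integrable_const_bound[where B="\<Sum>u\<in>UU L. \<bar>f u\<bar>"])
    show "AE x in \<mu>. norm (f x) \<le> (\<Sum>u\<in>UU L. \<bar>f u\<bar>)" using loc_bound[OF that] by simp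
    show "f \<in> borel_measurable \<mu>" by (rule loc_meas[OF that sets])
  qed
  have lin: "\<forall>f\<in>Pn n. \<forall>g\<in>Pn n. \<forall>a b. (\<integral>s. a * f s + b * g s \<partial>\<mu>) = a * (\<integral>s. f s \<partial>\<mu>) + b * (\<integral>s. g s \<partial>\<mu>)"
  proof (intro ballI allI)
    fix f g :: "'d config \<Rightarrow> real" and a b :: real
    assume "f \<in> Pn n" "g \<in> Pn n"
    then have fi: "integrable \<mu> f" and gi: "integrable \<mu> g" using intg[OF finite_D] by (auto simp: Pn_eq)
    show "(\<integral>s. a * f s + b * g s \<partial>\<mu>) = a * (\<integral>s. f s \<partial>\<mu>) + b * (\<integral>s. g s \<partial>\<mu>)"
      using fi gi by simp
  qed
  have pb: "\<forall>u. (\<integral>s. Fcyl (D n) u s \<partial>\<mu>) \<ge> 0"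
    by (intro allI Bochner_Integration.integral_nonneg Fcyl_nonneg[OF finite_D])
  have one: "(\<integral>s. (1::real) \<partial>\<mu>) = 1"
    by (subst lebesgue_integral_const) (simp add: M.prob_space)
  have sym: "\<forall>A B. A \<subseteq> D n \<and> B \<subseteq> D n \<and> lat_equiv A B \<longrightarrow> (\<integral>s. smono A s \<partial>\<mu>) = (\<integral>s. smono B s \<partial>\<mu>)"
  proof (intro allI impI, elim conjE)
    fix A B :: "'d site set" assume A: "A \<subseteq> D n" and "B \<subseteq> D n" and le: "lat_equiv A B"
    obtain g where g: "g \<in> latG" "B = g ` A" using le unfolding lat_equiv_def by blast
    have "finite A" using A finite_D by (rule finite_subset)
    then show "(\<integral>s. smono A s \<partial>\<mu>) = (\<integral>s. smono B s \<partial>\<mu>)"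
      using S g unfolding lattice_symmetric_def by blast
  qed
  have inv: "(\<Sum>i\<in>D (n - 1). \<integral>s. c i s * (f (flip i s) - f s) \<partial>\<mu>) = 0" if f: "f \<in> Pn (n - 1)" for f :: "'d config \<Rightarrow> real"
  proof -
    have fl: "loc (D (n - 1)) f" using f by (simp add: Pn_eq)
    have "f \<in> PS" by (rule loc_PS[OF finite_D fl])
    then have z: "(\<Sum>i\<in>{i. \<exists>s. f (flip i s) \<noteq> f s}. \<integral>s. c i s * (f (flip i s) - f s) \<partial>\<mu>) = 0"
      using I unfolding invariant_def by blast
    have ZD: "{i. \<exists>s. f (flip i s) \<noteq> f s} \<subseteq> D (n - 1)" using loc_flip_eq[OF fl] by blast
    have "(\<Sum>i\<in>{i. \<exists>s. f (flip i s) \<noteq> f s}. \<integral>s. c i s * (f (flip i s) - f s) \<partial>\<mu>)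
        = (\<Sum>i\<in>D (n - 1). \<integral>s. c i s * (f (flip i s) - f s) \<partial>\<mu>)"
    proof (rule sum.mono_neutral_left[OF finite_D ZD], rule ballI)
      fix i assume "i \<in> D (n - 1) - {i. \<exists>s. f (flip i s) \<noteq> f s}"
      then have "\<forall>s. f (flip i s) = f s" by auto
      then show "(\<integral>s. c i s * (f (flip i s) - f s) \<partial>\<mu>) = 0" by simp
    qed
    then show ?thesis using z by simp
  qed
  show ?thesis unfolding LP_feasible_def
    by (intro conjI lin pb one sym ballI inv)
qed




theorem mainTheorem6:
  fixes J h :: real
    and c :: "'d::finite site \<Rightarrow> 'd config \<Rightarrow> real"
    and m :: nat
    and p :: "'d config \<Rightarrow> real"
    and mstar :: "nat \<Rightarrow> (('d config \<Rightarrow> real) \<Rightarrow> real)"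
  assumes rate: "transition_rate J h c"
    and cov: "G_covariant c"
    and pP: "p \<in> Pn m"
    and opt: "\<forall>n\<ge>m. LP_optimal c p n (mstar n)"
  shows "convergent (\<lambda>n. mstar n p) \<and>
    (\<forall>l::nat. \<exists>r::nat \<Rightarrow> nat. strict_mono r \<and> (\<forall>k. max m l \<le> r k) \<and>
       (\<forall>A. A \<subseteq> D l \<longrightarrow> convergent (\<lambda>k. mstar (r k) (smono A))) \<and>
       (\<exists>\<mu>. is_prob_on_S \<mu> \<and> lattice_symmetric \<mu> \<and> invariant c \<mu> \<and>
          (\<integral>s. p s \<partial>\<mu>) = lim (\<lambda>n. mstar n p) \<and>
          (\<forall>A. A \<subseteq> D l \<longrightarrow> (\<integral>s. smono A s \<partial>\<mu>) = lim (\<lambda>k. mstar (r k) (smono A))) \<and>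
          (\<forall>\<mu>'. is_prob_on_S \<mu>' \<and> lattice_symmetric \<mu>' \<and> invariant c \<mu>' \<longrightarrow>
              (\<integral>s. p s \<partial>\<mu>) \<le> (\<integral>s. p s \<partial>\<mu>'))))"
proof -
  have cloc: "\<And>i. loc (insert i (nbr i)) (c i)"
    using rate unfolding transition_rate_def loc_def by blast
  have ploc: "loc (D m) p" using pP by (simp add: Pn_eq)
  interpret LPseq c m p mstar by (rule LPseq.intro[OF ploc opt])
  have cp: "(\<lambda>n. mstar n p) \<longlonglongrightarrow> lim (\<lambda>n. mstar n p)"
    using conv_p by (simp add: convergent_LIMSEQ_iff)
  have part4: "lim (\<lambda>n. mstar n p) \<le> (\<integral>s. p s \<partial>\<mu>')"
    if a: "is_prob_on_S \<mu>'" "lattice_symmetric \<mu>'" "invariant c \<mu>'" for \<mu>'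
  proof -
    have "\<forall>n\<ge>m. mstar n p \<le> (\<integral>s. p s \<partial>\<mu>')"
    proof (intro allI impI)
      fix n assume n: "m \<le> n"
      have "LP_feasible c n (\<lambda>f. \<integral>s. f s \<partial>\<mu>')" by (rule integral_feasible[OF cloc a])
      then show "mstar n p \<le> (\<integral>s. p s \<partial>\<mu>')" using opt n unfolding LP_optimal_def by blast
    qed
    then show ?thesis by (intro LIMSEQ_le_const2[OF cp]) blast
  qed
  have intp: "(\<integral>s. p s \<partial>MU) = lim (\<lambda>n. mstar n p)"
  proof -
    have "(\<integral>s. p s \<partial>MU) = LL p" by (rule MU_integral[OF finite_D ploc])
    moreover have "(\<lambda>i. mstar (qq i) p) \<longlonglongrightarrow> lim (\<lambda>n. mstar n p)"
      using LIMSEQ_subseq_LIMSEQ[OF cp qq(1)] by (simp add: o_def)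
    ultimately show ?thesis unfolding LL_def using limI by metis
  qed
  have MUok: "is_prob_on_S MU" unfolding is_prob_on_S_def using MU_prob sets_MU by blast
  show ?thesis
  proof (intro conjI allI)
    show "convergent (\<lambda>n. mstar n p)" by (rule conv_p)
  next
    fix l :: nat
    define N where "N = max m l"
    define r where "r k = qq (k + N)" for k
    have rsm: "strict_mono r" using qq(1) unfolding r_def strict_mono_def by simp
    have rge: "\<forall>k. max m l \<le> r k"
    proof
      fix k have "k + N \<le> qq (k + N)" by (rule seq_suble[OF qq(1)])
      moreover have "max m l \<le> k + N" unfolding N_def by simp
      ultimately show "max m l \<le> r k" unfolding r_def by (rule order_trans[rotated])
    qed
    have rt: "(\<lambda>k. mstar (r k) (smono A)) \<longlonglongrightarrow> LL (smono A)" if A: "A \<subseteq> D l" for A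
    proof -
      have "finite A" using A finite_D by (rule finite_subset)
      then have "(\<lambda>i. mstar (qq i) (smono A)) \<longlonglongrightarrow> LL (smono A)"
        by (rule LL_tendsto) (rule loc_smono[OF subset_refl])
      from LIMSEQ_ignore_initial_segment[OF this, of N] show ?thesis unfolding r_def .
    qed
    have conv: "\<forall>A. A \<subseteq> D l \<longrightarrow> convergent (\<lambda>k. mstar (r k) (smono A))"
      using rt convergentI by blast
    have lims: "\<forall>A. A \<subseteq> D l \<longrightarrow> (\<integral>s. smono A s \<partial>MU) = lim (\<lambda>k. mstar (r k) (smono A))"
    proof (intro allI impI)
      fix A :: "'d site set" assume A: "A \<subseteq> D l"
      have "finite A" using A finite_D by (rule finite_subset)
      then have "(\<integral>s. smono A s \<partial>MU) = LL (smono A)" by (rule MU_integral) (rule loc_smono[OF subset_refl])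
      also have "\<dots> = lim (\<lambda>k. mstar (r k) (smono A))" using limI[OF rt[OF A]] by simp
      finally show "(\<integral>s. smono A s \<partial>MU) = lim (\<lambda>k. mstar (r k) (smono A))" .
    qed
    have ex: "\<exists>\<mu>. is_prob_on_S \<mu> \<and> lattice_symmetric \<mu> \<and> invariant c \<mu> \<and>
          (\<integral>s. p s \<partial>\<mu>) = lim (\<lambda>n. mstar n p) \<and>
          (\<forall>A. A \<subseteq> D l \<longrightarrow> (\<integral>s. smono A s \<partial>\<mu>) = lim (\<lambda>k. mstar (r k) (smono A))) \<and>
          (\<forall>\<mu>'. is_prob_on_S \<mu>' \<and> lattice_symmetric \<mu>' \<and> invariant c \<mu>' \<longrightarrow>
              (\<integral>s. p s \<partial>\<mu>) \<le> (\<integral>s. p s \<partial>\<mu>'))"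
    proof (intro exI[of _ MU] conjI MUok MU_sym MU_inv[OF cloc] intp lims allI impI)
      fix \<mu>' assume "is_prob_on_S \<mu>' \<and> lattice_symmetric \<mu>' \<and> invariant c \<mu>'"
      then show "(\<integral>s. p s \<partial>MU) \<le> (\<integral>s. p s \<partial>\<mu>')" using part4 intp by auto
    qed
    show "\<exists>r::nat \<Rightarrow> nat. strict_mono r \<and> (\<forall>k. max m l \<le> r k) \<and>
       (\<forall>A. A \<subseteq> D l \<longrightarrow> convergent (\<lambda>k. mstar (r k) (smono A))) \<and>
       (\<exists>\<mu>. is_prob_on_S \<mu> \<and> lattice_symmetric \<mu> \<and> invariant c \<mu> \<and>
          (\<integral>s. p s \<partial>\<mu>) = lim (\<lambda>n. mstar n p) \<and>
          (\<forall>A. A \<subseteq> D l \<longrightarrow> (\<integral>s. smono A s \<partial>\<mu>) = lim (\<lambda>k. mstar (r k) (smono A))) \<and>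
          (\<forall>\<mu>'. is_prob_on_S \<mu>' \<and> lattice_symmetric \<mu>' \<and> invariant c \<mu>' \<longrightarrow>
              (\<integral>s. p s \<partial>\<mu>) \<le> (\<integral>s. p s \<partial>\<mu>')))"
      using rsm rge conv ex by blast
  qed
qed


end
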